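(* Let $(\Lambda,d)$ be a $k$-graph. Let $(x;(m,n)),(y;(p,q))\in P_\Lambda$ with $p\not\le d(y)$ and $(x;n)\approx(y;p)$. Define $z=x(0,n\wedge d(x))\,\sigma^{p\wedge d(y)}y$. Then (i) $z\in\Lambda^{\le\infty}$; (ii) $m\wedge d(x)=m\wedge d(z)$ and $n\wedge d(x)=n\wedge d(z)$; (iii) $x(m\wedge d(x),n\wedge d(x))=z(m\wedge d(z),n\wedge d(z))$ and $y(p\wedge d(y),q\wedge d(y))=z(n\wedge d(z),(n+q-p)\wedge d(z))$.
   Context: A $k$-graph $(\Lambda,d)$ is a countable category with a degree functor $d:\Lambda\to\mathbb{N}^k$ satisfying unique factorization (if $d(\lambda)=m+n$ there are unique $\mu,\nu$ with $\lambda=\mu\nu$, $d(\mu)=m$, $d(\nu)=n$); $\Lambda^0$ vertices, $r,s$ range/source, $v\Lambda^n=\{\lambda:r(\lambda)=v,d(\lambda)=n\}$; $e_i$ standard basis, $\le$ coordinatewise, $\vee,\wedge$ coordinatewise max/min. For $m\in(\mathbb{N}\cup\{\infty\})^k$, $\Omega_{k,m}$ is the $k$-graph with objects $\{p\in\mathbb{N}^k:p\le m\}$, morphisms $(p,q)$ with $p\le q\le m$, $r(p,q)=p$, $s(p,q)=q$, $d(p,q)=q-p$. A graph morphism $x:\Omega_{k,m}\to\Lambda$ is a degree-preserving functor; $d(x)=m$, $x(a,b)=x((a,b))$, $x(a)=x(a,a)$. It is a boundary path if there is $n_x\in\mathbb{N}^k$, $n_x\le d(x)$, with $x(p)\Lambda^{e_i}=\emptyset$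 whenever $p\in\mathbb{N}^k$, $n_x\le p\le d(x)$, $p_i=d(x)_i$; $\Lambda^{\le\infty}$ is the set of boundary paths. For $p\in\mathbb{N}^k$, $p\le d(x)$, $\sigma^px(a,b)=x(a+p,b+p)$ on $\Omega_{k,d(x)-p}$. For $\lambda\in\Lambda$ with $s(\lambda)=x(0)$, $\lambda x:\Omega_{k,d(\lambda)+d(x)}\to\Lambda$ is the graph morphism with $(\lambda x)(0,d(\lambda))=\lambda$ and $(\lambda x)(0,p)=\lambda\,x(0,p-d(\lambda))$ for $d(\lambda)\le p\le d(\lambda)+d(x)$. Let $V_\Lambda=\{(x;m):x\in\Lambda^{\le\infty},m\in\mathbb{N}^k,m\not\le d(x)\}$ with $(x;m)\approx(y;p)$ iff $x(m\wedge d(x))=y(p\wedge d(y))$ and $m-m\wedge d(x)=p-p\wedge d(y)$. Let $P_\Lambda=\{(x;(m,n)):x\in\Lambda^{\le\infty},m,n\in\mathbb{N}^k,m\le n,n\not\le d(x)\}$. *)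

theory Defs
  imports Main "HOL-Library.Function_Algebras" "HOL-Library.Extended_Nat" "HOL-Library.Countable_Set"
begin

(* Elements of N^k are functions 'k => nat for a finite index type 'k (|'k| = k);
   elements of (N u {oo})^k are functions 'k => enat. *)

type_synonym 'k deg = "'k \<Rightarrow> nat"

record ('v, 'a, 'k) kgraph =
  Obj :: "'v set"
  Mor :: "'a set"
  src :: "'a \<Rightarrow> 'v"
  rng :: "'a \<Rightarrow> 'v"
  cmp :: "'a \<Rightarrow> 'a \<Rightarrow> 'a"     (* cmp l m = l m, defined when src l = rng m *)
  ident :: "'v \<Rightarrow> 'a"
  deg :: "'a \<Rightarrow> 'k deg"

definition is_kgraph :: "('v, 'a, 'k::finite) kgraph \<Rightarrow> bool" where
  "is_kgraph G \<longleftrightarrow>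
     countable (Obj G) \<and> countable (Mor G) \<and>
     (\<forall>l\<in>Mor G. src G l \<in> Obj G \<and> rng G l \<in> Obj G) \<and>
     (\<forall>v\<in>Obj G. ident G v \<in> Mor G \<and> src G (ident G v) = v \<and> rng G (ident G v) = v) \<and>
     (\<forall>l\<in>Mor G. \<forall>m\<in>Mor G. src G l = rng G m \<longrightarrow>
        cmp G l m \<in> Mor G \<and> src G (cmp G l m) = src G m \<and> rng G (cmp G l m) = rng G l) \<and>
     (\<forall>l\<in>Mor G. \<forall>m\<in>Mor G. \<forall>n\<in>Mor G. src G l = rng G m \<and> src G m = rng G n \<longrightarrow>
        cmp G (cmp G l m) n = cmp G l (cmp G m n)) \<and>
     (\<forall>l\<in>Mor G. cmp G (ident G (rng G l)) l = l \<and> cmp G l (ident G (src G l)) = l) \<and>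
     (\<forall>l\<in>Mor G. \<forall>m\<in>Mor G. src G l = rng G m \<longrightarrow> deg G (cmp G l m) = deg G l + deg G m) \<and>
     (\<forall>v\<in>Obj G. deg G (ident G v) = 0) \<and>
     (\<forall>l\<in>Mor G. \<forall>m n. deg G l = m + n \<longrightarrow>
        (\<exists>!(a, b). a \<in> Mor G \<and> b \<in> Mor G \<and> src G a = rng G b \<and> l = cmp G a b \<and>
                   deg G a = m \<and> deg G b = n))"

definition ebasis :: "'k \<Rightarrow> 'k deg" where
  "ebasis i = (\<lambda>j. if j = i then 1 else 0)"

(* A graph morphism x : Omega_{k,m} -> Lambda is represented by the pair (m, f),
   with d(x) = fst x = m and x(a,b) = snd x a b (values outside a <= b <= m irrelevant). *)
type_synonym ('k, 'a) gmor = "('k \<Rightarrow> enat) \<times> ('k deg \<Rightarrow> 'k deg \<Rightarrow> 'a)"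

definition le_ed :: "'k deg \<Rightarrow> ('k \<Rightarrow> enat) \<Rightarrow> bool" where
  "le_ed p D \<longleftrightarrow> (\<forall>i. enat (p i) \<le> D i)"

definition meet_ed :: "'k deg \<Rightarrow> ('k \<Rightarrow> enat) \<Rightarrow> 'k deg" where
  "meet_ed m D = (\<lambda>i. the_enat (min (enat (m i)) (D i)))"

definition graph_morphism :: "('v, 'a, 'k::finite) kgraph \<Rightarrow> ('k, 'a) gmor \<Rightarrow> bool" where
  "graph_morphism G x \<longleftrightarrow>
     (\<forall>p q. p \<le> q \<and> le_ed q (fst x) \<longrightarrow> snd x p q \<in> Mor G \<and> deg G (snd x p q) = q - p) \<and>
     (\<forall>p q t. p \<le> q \<and> q \<le> t \<and> le_ed t (fst x) \<longrightarrow>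
        src G (snd x p q) = rng G (snd x q t) \<and> cmp G (snd x p q) (snd x q t) = snd x p t) \<and>
     (\<forall>p. le_ed p (fst x) \<longrightarrow> snd x p p = ident G (rng G (snd x p p)))"

definition vtx :: "('v, 'a, 'k) kgraph \<Rightarrow> ('k, 'a) gmor \<Rightarrow> 'k deg \<Rightarrow> 'v" where
  "vtx G x p = rng G (snd x p p)"

definition boundary_path :: "('v, 'a, 'k::finite) kgraph \<Rightarrow> ('k, 'a) gmor \<Rightarrow> bool" where
  "boundary_path G x \<longleftrightarrow> graph_morphism G x \<and>
     (\<exists>nx. le_ed nx (fst x) \<and>
        (\<forall>p i. nx \<le> p \<and> le_ed p (fst x) \<and> enat (p i) = fst x i \<longrightarrow>
           \<not> (\<exists>l\<in>Mor G. rng G l = vtx G x p \<and> deg G l = ebasis i)))"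

definition shift :: "'k deg \<Rightarrow> ('k, 'a) gmor \<Rightarrow> ('k, 'a) gmor" where
  "shift p x = ((\<lambda>i. fst x i - enat (p i)), (\<lambda>a b. snd x (a + p) (b + p)))"

(* lambda x: the graph morphism on Omega_{k, d(lambda)+d(x)} determined by
   (lambda x)(0,p) = lambda x(0, p - d(lambda)) for p >= d(lambda); its segment (a,b)
   is the middle factor of lambda x(0, (b \/ d lambda) - d lambda) of degree b - a
   after a prefix of degree a. *)
definition cat_path :: "('v, 'a, 'k::finite) kgraph \<Rightarrow> 'a \<Rightarrow> ('k, 'a) gmor \<Rightarrow> ('k, 'a) gmor" where
  "cat_path G l x =
     ((\<lambda>i. enat (deg G l i) + fst x i),
      (\<lambda>a b. let t = sup b (deg G l);
                 mu = cmp G l (snd x 0 (t - deg G l))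
             in THE be. \<exists>al ga. al \<in> Mor G \<and> be \<in> Mor G \<and> ga \<in> Mor G \<and>
                   src G al = rng G be \<and> src G be = rng G ga \<and>
                   mu = cmp G (cmp G al be) ga \<and>
                   deg G al = a \<and> deg G be = b - a \<and> deg G ga = t - b))"

definition in_P :: "('v, 'a, 'k::finite) kgraph \<Rightarrow> ('k, 'a) gmor \<Rightarrow> 'k deg \<Rightarrow> 'k deg \<Rightarrow> bool" where
  "in_P G x m n \<longleftrightarrow> boundary_path G x \<and> m \<le> n \<and> \<not> le_ed n (fst x)"

definition in_V :: "('v, 'a, 'k::finite) kgraph \<Rightarrow> ('k, 'a) gmor \<Rightarrow> 'k deg \<Rightarrow> bool" where
  "in_V G x m \<longleftrightarrow> boundary_path G x \<and> \<not> le_ed m (fst x)"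

definition approxV :: "('v, 'a, 'k::finite) kgraph \<Rightarrow> ('k, 'a) gmor \<Rightarrow> 'k deg \<Rightarrow> ('k, 'a) gmor \<Rightarrow> 'k deg \<Rightarrow> bool" where
  "approxV G x m y p \<longleftrightarrow> in_V G x m \<and> in_V G y p \<and>
     vtx G x (meet_ed m (fst x)) = vtx G y (meet_ed p (fst y)) \<and>
     m - meet_ed m (fst x) = p - meet_ed p (fst y)"

end

theory Submission
  imports Defs
begin

lemma fe_pt: "(f::'k deg) \<le> g \<longleftrightarrow> (\<forall>i. f i \<le> g i)" by (simp add: le_fun_def)

lemma pwle: "(\<And>i. f i \<le> g i) \<Longrightarrow> (f::'k deg) \<le> g" by (rule le_funI)
lemma F1: "(b::'k deg) \<le> sup v a - a + b"
  by (rule le_funI) (simp add: sup_nat_def max_def; arith?)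
lemma F2: "(a::'k deg) + (sup v a - a + b - b) = sup v a"
  by (rule ext) (simp add: sup_nat_def max_def; arith?)
lemma F3: assumes "(v::'k deg) \<le> w" shows "sup v a - a + b \<le> sup w a - a + b"
proof (rule le_funI)
  fix i have "v i \<le> w i" using assms by (rule le_funD)
  then show "(sup v a - a + b) i \<le> (sup w a - a + b) i" by (simp add: sup_nat_def max_def; arith?)
qed
lemma F4: "(v::'k deg) \<le> sup v a" by simp
lemma F5: assumes "(u::'k deg) \<le> v" shows "u + (v - u) = v"
proof (rule ext)
  fix i have "u i \<le> v i" using assms by (rule le_funD)
  then show "(u + (v - u)) i = v i" by simp
qed
lemma F6: assumes "(u::'k deg) \<le> v" "v \<le> w" shows "(v - u) + (w - v) = w - u"
proof (rule ext)
  fix i have "u i \<le> v i" "v i \<le> w i" using assms by (auto intro: le_funD)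
  then show "((v - u) + (w - v)) i = (w - u) i" by simp
qed
lemma F7: "(u::'k deg) - u = 0" by (rule ext) simp
lemma F8: assumes "a + (ny - b) \<le> (u::'k deg)" shows "a \<le> u" "ny \<le> u - a + b"
proof -
  have h: "a i + (ny i - b i) \<le> u i" for i using le_funD[OF assms, of i] by simp
  show "a \<le> u" proof (rule le_funI) fix i show "a i \<le> u i" using h[of i] by arith qed
  show "ny \<le> u - a + b" proof (rule le_funI) fix i show "ny i \<le> (u - a + b) i" using h[of i] by simp qed
qed
lemma F10: "(b::'k deg) \<le> u - a + b" by (rule le_funI) simp
lemma F11: "sup a a - a + b = (b::'k deg)" by (rule ext) simp
lemma F12: assumes "(b::'k deg) \<le> qq" shows "sup (a + (qq - b)) a - a + b = qq" "sup (a + (qq - b)) a = a + (qq - b)"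
   "a + (qq - b) - a = qq - b"
proof -
  have h: "b i \<le> qq i" for i using le_funD[OF assms, of i] by simp
  show "sup (a + (qq - b)) a - a + b = qq" proof (rule ext) fix i show "(sup (a + (qq - b)) a - a + b) i = qq i"
    using h[of i] by (simp add: sup_nat_def max_def; arith?) qed
  show "sup (a + (qq - b)) a = a + (qq - b)" by (rule ext) (simp add: sup_nat_def max_def)
  show "a + (qq - b) - a = qq - b" by (rule ext) simp
qed
lemma F13: "(0::'k deg) \<le> a" by (rule le_funI) simp

locale kg = fixes G :: "('v,'a,'k::finite) kgraph" assumes kg: "is_kgraph G"
begin

lemma K: "countable (Obj G) \<and> countable (Mor G) \<and>
     (\<forall>l\<in>Mor G. src G l \<in> Obj G \<and> rng G l \<in> Obj G) \<and>
     (\<forall>v\<in>Obj G. ident G v \<in> Mor G \<and> src G (ident G v) = v \<and> rng G (ident G v) = v) \<and>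
     (\<forall>l\<in>Mor G. \<forall>m\<in>Mor G. src G l = rng G m \<longrightarrow>
        cmp G l m \<in> Mor G \<and> src G (cmp G l m) = src G m \<and> rng G (cmp G l m) = rng G l) \<and>
     (\<forall>l\<in>Mor G. \<forall>m\<in>Mor G. \<forall>n\<in>Mor G. src G l = rng G m \<and> src G m = rng G n \<longrightarrow>
        cmp G (cmp G l m) n = cmp G l (cmp G m n)) \<and>
     (\<forall>l\<in>Mor G. cmp G (ident G (rng G l)) l = l \<and> cmp G l (ident G (src G l)) = l) \<and>
     (\<forall>l\<in>Mor G. \<forall>m\<in>Mor G. src G l = rng G m \<longrightarrow> deg G (cmp G l m) = deg G l + deg G m) \<and>
     (\<forall>v\<in>Obj G. deg G (ident G v) = 0) \<and>
     (\<forall>l\<in>Mor G. \<forall>m n. deg G l = m + n \<longrightarrow>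
        (\<exists>!(a, b). a \<in> Mor G \<and> b \<in> Mor G \<and> src G a = rng G b \<and> l = cmp G a b \<and>
                   deg G a = m \<and> deg G b = n))"
  using kg unfolding is_kgraph_def .

lemma obj: "l \<in> Mor G \<Longrightarrow> src G l \<in> Obj G \<and> rng G l \<in> Obj G"
  using K[THEN conjunct2, THEN conjunct2, THEN conjunct1] by blast
lemma idp: "v \<in> Obj G \<Longrightarrow> ident G v \<in> Mor G \<and> src G (ident G v) = v \<and> rng G (ident G v) = v"
  using K[THEN conjunct2, THEN conjunct2, THEN conjunct2, THEN conjunct1] by blast
lemma cmpp: "l \<in> Mor G \<Longrightarrow> m \<in> Mor G \<Longrightarrow> src G l = rng G m \<Longrightarrow>
   cmp G l m \<in> Mor G \<and> src G (cmp G l m) = src G m \<and> rng G (cmp G l m) = rng G l"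
  using K[THEN conjunct2, THEN conjunct2, THEN conjunct2, THEN conjunct2, THEN conjunct1] by blast
lemma assoc: "l \<in> Mor G \<Longrightarrow> m \<in> Mor G \<Longrightarrow> n \<in> Mor G \<Longrightarrow> src G l = rng G m \<Longrightarrow> src G m = rng G n \<Longrightarrow>
   cmp G (cmp G l m) n = cmp G l (cmp G m n)"
  using K[THEN conjunct2, THEN conjunct2, THEN conjunct2, THEN conjunct2, THEN conjunct2, THEN conjunct1] by blast
lemma idl: "l \<in> Mor G \<Longrightarrow> cmp G (ident G (rng G l)) l = l"
  using K[THEN conjunct2, THEN conjunct2, THEN conjunct2, THEN conjunct2, THEN conjunct2, THEN conjunct2, THEN conjunct1] by blast
lemma idr: "l \<in> Mor G \<Longrightarrow> cmp G l (ident G (src G l)) = l"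
  using K[THEN conjunct2, THEN conjunct2, THEN conjunct2, THEN conjunct2, THEN conjunct2, THEN conjunct2, THEN conjunct1] by blast
lemma degc: "l \<in> Mor G \<Longrightarrow> m \<in> Mor G \<Longrightarrow> src G l = rng G m \<Longrightarrow> deg G (cmp G l m) = deg G l + deg G m"
  using K[THEN conjunct2, THEN conjunct2, THEN conjunct2, THEN conjunct2, THEN conjunct2, THEN conjunct2, THEN conjunct2, THEN conjunct1] by blast
lemma degid: "v \<in> Obj G \<Longrightarrow> deg G (ident G v) = 0"
  using K[THEN conjunct2, THEN conjunct2, THEN conjunct2, THEN conjunct2, THEN conjunct2, THEN conjunct2, THEN conjunct2, THEN conjunct2, THEN conjunct1] by blast
lemma UF: "l \<in> Mor G \<Longrightarrow> deg G l = m + n \<Longrightarrow>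
        (\<exists>!(a, b). a \<in> Mor G \<and> b \<in> Mor G \<and> src G a = rng G b \<and> l = cmp G a b \<and>
                   deg G a = m \<and> deg G b = n)"
  using K[THEN conjunct2, THEN conjunct2, THEN conjunct2, THEN conjunct2, THEN conjunct2, THEN conjunct2, THEN conjunct2, THEN conjunct2, THEN conjunct2] by blast

lemma fact2:
  assumes "w \<in> Mor G" "u \<le> deg G w"
  shows "\<exists>a b. a \<in> Mor G \<and> b \<in> Mor G \<and> src G a = rng G b \<and> w = cmp G a b \<and>
                   deg G a = u \<and> deg G b = deg G w - u"
proof -
  have "deg G w = u + (deg G w - u)" using assms(2) by (auto simp: fun_eq_iff le_fun_def)
  from UF[OF assms(1) this] show ?thesis by auto
qed

lemma uniq2:
  assumes "a \<in> Mor G" "b \<in> Mor G" "a' \<in> Mor G" "b' \<in> Mor G" "src G a = rng G b" "src G a' = rng G b'"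
    "cmp G a b = cmp G a' b'" "deg G a = deg G a'" "deg G b = deg G b'"
  shows "a = a' \<and> b = b'"
proof -
  have "cmp G a b \<in> Mor G" "deg G (cmp G a b) = deg G a + deg G b" using assms cmpp degc by auto
  from UF[OF this] have "\<exists>!(x, y). x \<in> Mor G \<and> y \<in> Mor G \<and> src G x = rng G y \<and> cmp G a b = cmp G x y \<and>
                   deg G x = deg G a \<and> deg G y = deg G b" .
  then have "(a,b) = (a',b')" using assms unfolding Ex1_def by (smt (verit) case_prodI)
  then show ?thesis by simp
qed

lemma deg0: "l \<in> Mor G \<Longrightarrow> deg G l = 0 \<Longrightarrow> l = ident G (rng G l)"
proof -
  assume l: "l \<in> Mor G" "deg G l = 0"
  have "ident G (rng G l) = l \<and> l = ident G (src G l)"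
    apply (rule uniq2) using l obj[OF l(1)] idp idl[OF l(1)] idr[OF l(1)] degid by auto
  then show ?thesis by simp
qed


definition seg where "seg w T u v = (THE be. \<exists>al ga. al \<in> Mor G \<and> be \<in> Mor G \<and> ga \<in> Mor G \<and>
                   src G al = rng G be \<and> src G be = rng G ga \<and>
                   w = cmp G (cmp G al be) ga \<and>
                   deg G al = u \<and> deg G be = v - u \<and> deg G ga = T - v)"

lemma seg_char:
  assumes "al \<in> Mor G" "be \<in> Mor G" "ga \<in> Mor G" "src G al = rng G be" "src G be = rng G ga"
    "w = cmp G (cmp G al be) ga" "deg G al = u" "deg G be = v - u" "deg G ga = T - v"
  shows "seg w T u v = be"
  unfolding seg_def
proof (rule the_equality)
  show "\<exists>al ga. al \<in> Mor G \<and> be \<in> Mor G \<and> ga \<in> Mor G \<and>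
                   src G al = rng G be \<and> src G be = rng G ga \<and>
                   w = cmp G (cmp G al be) ga \<and>
                   deg G al = u \<and> deg G be = v - u \<and> deg G ga = T - v" using assms by blast
next
  fix be' assume "\<exists>al ga. al \<in> Mor G \<and> be' \<in> Mor G \<and> ga \<in> Mor G \<and>
                   src G al = rng G be' \<and> src G be' = rng G ga \<and>
                   w = cmp G (cmp G al be') ga \<and>
                   deg G al = u \<and> deg G be' = v - u \<and> deg G ga = T - v"
  then obtain al' ga' where h: "al' \<in> Mor G" "be' \<in> Mor G" "ga' \<in> Mor G"
      "src G al' = rng G be'" "src G be' = rng G ga'"
                   "w = cmp G (cmp G al' be') ga'"
                   "deg G al' = u" "deg G be' = v - u" "deg G ga' = T - v" by blast
  have c1: "cmp G al be \<in> Mor G" "src G (cmp G al be) = rng G ga" "deg G (cmp G al be) = u + (v - u)"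
    using assms cmpp degc by auto
  have c2: "cmp G al' be' \<in> Mor G" "src G (cmp G al' be') = rng G ga'" "deg G (cmp G al' be') = u + (v - u)"
    using h cmpp degc by auto
  have "cmp G al be = cmp G al' be'"
    using uniq2[OF c1(1) assms(3) c2(1) h(3) c1(2) c2(2)] assms h c1 c2 by auto
  then show "be' = be" using uniq2[OF assms(1,2) h(1,2) assms(4) h(4)] assms h by auto
qed

lemma seg_ex:
  assumes "w \<in> Mor G" "u \<le> v" "v \<le> deg G w" "T = deg G w"
  shows "\<exists>al ga. al \<in> Mor G \<and> seg w T u v \<in> Mor G \<and> ga \<in> Mor G \<and>
                   src G al = rng G (seg w T u v) \<and> src G (seg w T u v) = rng G ga \<and>
                   w = cmp G (cmp G al (seg w T u v)) ga \<and>
                   deg G al = u \<and> deg G (seg w T u v) = v - u \<and> deg G ga = T - v"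
proof -
  obtain w1 ga where A: "w1 \<in> Mor G" "ga \<in> Mor G" "src G w1 = rng G ga" "w = cmp G w1 ga"
     "deg G w1 = v" "deg G ga = deg G w - v" using fact2[OF assms(1,3)] by blast
  obtain al be where B: "al \<in> Mor G" "be \<in> Mor G" "src G al = rng G be" "w1 = cmp G al be"
     "deg G al = u" "deg G be = v - u" using fact2[OF A(1)] assms(2) A(5) by blast
  have sb: "src G be = rng G ga" using A B cmpp by metis
  have "seg w T u v = be" apply (rule seg_char[OF B(1,2) A(2) B(3) sb]) using A B assms by auto
  then show ?thesis using A B sb assms by auto
qed

lemma gm_mor: "graph_morphism G x \<Longrightarrow> p \<le> q \<Longrightarrow> le_ed q (fst x) \<Longrightarrow>
   snd x p q \<in> Mor G \<and> deg G (snd x p q) = q - p"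
  unfolding graph_morphism_def by blast
lemma gm_cmp: "graph_morphism G x \<Longrightarrow> p \<le> q \<Longrightarrow> q \<le> t \<Longrightarrow> le_ed t (fst x) \<Longrightarrow>
   src G (snd x p q) = rng G (snd x q t) \<and> cmp G (snd x p q) (snd x q t) = snd x p t"
  unfolding graph_morphism_def by blast
lemma gm_id: "graph_morphism G x \<Longrightarrow> le_ed p (fst x) \<Longrightarrow> snd x p p = ident G (rng G (snd x p p))"
  unfolding graph_morphism_def by blast

lemma le_ed_mono: "p \<le> q \<Longrightarrow> le_ed q D \<Longrightarrow> le_ed p D"
  unfolding le_ed_def le_fun_def by (meson enat_ord_simps(1) order_trans)

lemma gm_src: "graph_morphism G x \<Longrightarrow> p \<le> q \<Longrightarrow> le_ed q (fst x) \<Longrightarrow> src G (snd x p q) = vtx G x q"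
  unfolding vtx_def using gm_cmp[of x p q q] by auto

lemma gm_rng: "graph_morphism G x \<Longrightarrow> p \<le> q \<Longrightarrow> le_ed q (fst x) \<Longrightarrow> rng G (snd x p q) = vtx G x p"
proof -
  assume a: "graph_morphism G x" "p \<le> q" "le_ed q (fst x)"
  have lp: "le_ed p (fst x)" using le_ed_mono a by blast
  have m: "snd x p p \<in> Mor G" using gm_mor[OF a(1) _ lp] by auto
  have "src G (snd x p p) = rng G (snd x p q)" using gm_cmp[OF a(1) _ a(2,3)] by auto
  moreover have "src G (snd x p p) = rng G (snd x p p)"
    using gm_id[OF a(1) lp] idp obj[OF m] by metis
  ultimately show ?thesis unfolding vtx_def by simp
qed

end

lemma te_min: "enat (the_enat (min (enat k) X)) = min (enat k) X" by (cases X) auto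
lemma meet_le: "le_ed (meet_ed m D) D" unfolding le_ed_def meet_ed_def using te_min by simp
lemma meet_mono: "m \<le> n \<Longrightarrow> meet_ed m D \<le> meet_ed n D"
  unfolding meet_ed_def le_fun_def apply auto subgoal for i by (cases "D i") (auto simp: min_le_iff_disj) done

lemma tmin: "the_enat (min (enat k) (enat j)) = min k j" by (simp add: min_def, arith?)
lemma tminf: "the_enat (min (enat k) \<infinity>) = k" by simp
lemma coord:
  fixes X Y :: enat
  assumes "a = the_enat (min (enat n) X)" "b = the_enat (min (enat p) Y)" "n - a = p - b" "m \<le> n" "p \<le> q"
  shows "the_enat (min (enat m) X) = the_enat (min (enat m) (enat a + (Y - enat b)))
   \<and> the_enat (min (enat n) X) = the_enat (min (enat n) (enat a + (Y - enat b)))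
   \<and> the_enat (min (enat (n + q - p)) (enat a + (Y - enat b))) = a + (the_enat (min (enat q) Y) - b)"
proof (cases X)
  case (enat X')
  then show ?thesis
  proof (cases Y)
    case (enat Y')
    have ab: "a = min n X'" "b = min p Y'" using assms \<open>X = enat X'\<close> enat by (simp_all only: tmin)
    show ?thesis
    proof (cases "n \<le> X'")
      case True
      then have "a = n" "b = p" "p \<le> Y'" using ab assms(3) by auto
      then show ?thesis using True assms \<open>X = enat X'\<close> enat by (simp add: min_def, arith?)
    next
      case False
      then have "a = X'" "b = Y'" "Y' < p" using ab assms(3) by (auto simp: min_def split: if_splits)
      then show ?thesis using False assms \<open>X = enat X'\<close> enat by (simp add: min_def, arith?)
    qed
  next
    case infinity
    have ab: "a = min n X'" "b = p" using assms \<open>X = enat X'\<close> infinity by (simp_all only: tmin tminf)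
    then have "n \<le> X'" "a = n" using assms(3) by (auto simp: min_def split: if_splits)
    then show ?thesis using ab assms \<open>X = enat X'\<close> infinity by (simp add: min_def, arith?)
  qed
next
  case infinity
  then show ?thesis
  proof (cases Y)
    case (enat Y')
    have ab: "a = n" "b = min p Y'" using assms \<open>X = \<infinity>\<close> enat by (simp_all only: tmin tminf)
    then have "p \<le> Y'" "b = p" using assms(3) by (auto simp: min_def split: if_splits)
    then show ?thesis using ab assms \<open>X = \<infinity>\<close> enat by (simp add: min_def, arith?)
  next
    case inf2: infinity
    have "a = n" "b = p" using assms \<open>X = \<infinity>\<close> inf2 by (simp_all only: tmin tminf)
    then show ?thesis using assms \<open>X = \<infinity>\<close> inf2 by simp
  qed
qed

lemma rng_sc: "enat v \<le> enat a + (Y - enat b) \<Longrightarrow> enat b \<le> Y \<Longrightarrow> enat (max v a - a + b) \<le> Y"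
  by (cases Y) auto
lemma bd_sc: "enat u = enat a + (Y - enat b) \<Longrightarrow> enat b \<le> Y \<Longrightarrow> enat (u - a + b) = Y \<and> a \<le> u"
  by (cases Y) auto
lemma nz_sc: "enat ny \<le> Y \<Longrightarrow> enat b \<le> Y \<Longrightarrow> enat (a + (ny - b)) \<le> enat a + (Y - enat b)"
  by (cases Y) auto

context kg begin

lemma main:
  assumes P1: "in_P G x m n" and P2: "in_P G y p q"
    and ap: "approxV G x n y p"
    and zdef: "z = cat_path G (snd x 0 (meet_ed n (fst x))) (shift (meet_ed p (fst y)) y)"
  shows "boundary_path G z \<and>
         (meet_ed m (fst x) = meet_ed m (fst z) \<and> meet_ed n (fst x) = meet_ed n (fst z)) \<and>
         (snd x (meet_ed m (fst x)) (meet_ed n (fst x)) = snd z (meet_ed m (fst z)) (meet_ed n (fst z)) \<and>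
         snd y (meet_ed p (fst y)) (meet_ed q (fst y)) = snd z (meet_ed n (fst z)) (meet_ed (n + q - p) (fst z)))"
proof -
  define a where "a = meet_ed n (fst x)"
  define b where "b = meet_ed p (fst y)"
  define lam where "lam = snd x 0 a"
  have gx: "graph_morphism G x" using P1 unfolding in_P_def boundary_path_def by blast
  have gy: "graph_morphism G y" using P2 unfolding in_P_def boundary_path_def by blast
  have bpy: "boundary_path G y" using P2 unfolding in_P_def by blast
  have mn: "m \<le> n" using P1 unfolding in_P_def by blast
  have pq: "p \<le> q" using P2 unfolding in_P_def by blast
  have aD: "le_ed a (fst x)" unfolding a_def by (rule meet_le)
  have bD: "le_ed b (fst y)" unfolding b_def by (rule meet_le)
  have bDi: "\<And>i. enat (b i) \<le> fst y i" using bD unfolding le_ed_def by blast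
  have z0: "(0::'k deg) \<le> a" by (rule F13)
  have lam: "lam \<in> Mor G" "deg G lam = a" using gm_mor[OF gx z0 aD] unfolding lam_def by auto
  have vxy: "vtx G x a = vtx G y b" using ap unfolding approxV_def a_def b_def by blast
  have vab: "n - a = p - b" using ap unfolding approxV_def a_def b_def by blast
  have slam: "src G lam = vtx G y b" using gm_src[OF gx z0 aD] vxy unfolding lam_def by auto
  have Dz: "fst z = (\<lambda>i. enat (a i) + (fst y i - enat (b i)))"
    unfolding zdef cat_path_def shift_def a_def[symmetric] b_def[symmetric] lam_def[symmetric]
    using lam by simp
  define F where "F v = cmp G lam (snd y b (sup v a - a + b))" for v
  have fz: "\<And>u v. snd z u v = seg (F v) (sup v a) u v"
    unfolding zdef cat_path_def shift_def a_def[symmetric] b_def[symmetric] lam_def[symmetric] seg_def F_def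
    using lam by (simp add: Let_def)
  have rng: "le_ed (sup v a - a + b) (fst y)" if h: "le_ed v (fst z)" for v
    unfolding le_ed_def
  proof
    fix i
    have "enat (v i) \<le> enat (a i) + (fst y i - enat (b i))" using h unfolding le_ed_def Dz by auto
    from rng_sc[OF this bDi] show "enat ((sup v a - a + b) i) \<le> fst y i" by (simp add: sup_nat_def)
  qed
  have bw: "b \<le> sup v a - a + b" for v by (rule F1)
  have Fp: "F v \<in> Mor G \<and> deg G (F v) = sup v a \<and> src G (F v) = src G (snd y b (sup v a - a + b))"
    if h: "le_ed v (fst z)" for v
  proof -
    have Y: "snd y b (sup v a - a + b) \<in> Mor G" "deg G (snd y b (sup v a - a + b)) = sup v a - a + b - b"
      "rng G (snd y b (sup v a - a + b)) = vtx G y b"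
      using gm_mor[OF gy bw rng[OF h]] gm_rng[OF gy bw rng[OF h]] by auto
    have "deg G (F v) = a + (sup v a - a + b - b)" unfolding F_def using Y lam slam degc by auto
    also have "\<dots> = sup v a" by (rule F2)
    finally show ?thesis unfolding F_def using Y lam slam cmpp by auto
  qed
  have Fpre: "F w = cmp G (F v) (snd y (sup v a - a + b) (sup w a - a + b)) \<and>
      snd y (sup v a - a + b) (sup w a - a + b) \<in> Mor G \<and>
      src G (F v) = rng G (snd y (sup v a - a + b) (sup w a - a + b))"
    if h: "le_ed w (fst z)" "v \<le> w" for v w
  proof -
    have VW: "sup v a - a + b \<le> sup w a - a + b" using F3[OF h(2)] .
    have lv: "le_ed v (fst z)" using le_ed_mono h by blast
    note C = gm_cmp[OF gy bw VW rng[OF h(1)]]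
    have M1: "snd y b (sup v a - a + b) \<in> Mor G" using gm_mor[OF gy bw rng[OF lv]] by auto
    have M2: "snd y (sup v a - a + b) (sup w a - a + b) \<in> Mor G" using gm_mor[OF gy VW rng[OF h(1)]] by auto
    have r1: "rng G (snd y b (sup v a - a + b)) = vtx G y b" using gm_rng[OF gy bw rng[OF lv]] by auto
    have "F w = cmp G lam (cmp G (snd y b (sup v a - a + b)) (snd y (sup v a - a + b) (sup w a - a + b)))"
      unfolding F_def using C by simp
    also have "\<dots> = cmp G (F v) (snd y (sup v a - a + b) (sup w a - a + b))"
      unfolding F_def using assoc[OF lam(1) M1 M2] slam r1 C by simp
    finally show ?thesis using M2 Fp[OF lv] C by simp
  qed
  have zm: "snd z u v \<in> Mor G \<and> deg G (snd z u v) = v - u" if h: "u \<le> v" "le_ed v (fst z)" for u v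
  proof -
    have "v \<le> deg G (F v)" using Fp[OF h(2)] by simp
    from seg_ex[OF conjunct1[OF Fp[OF h(2)]] h(1) this] Fp[OF h(2)] show ?thesis unfolding fz by auto
  qed
  have zc: "src G (snd z u v) = rng G (snd z v w) \<and> cmp G (snd z u v) (snd z v w) = snd z u w"
    if h: "u \<le> v" "v \<le> w" "le_ed w (fst z)" for u v w
  proof -
    have lv: "le_ed v (fst z)" using le_ed_mono h by blast
    have dv: "v \<le> deg G (F v)" using Fp[OF lv] by simp
    have dw: "w \<le> deg G (F w)" using Fp[OF h(3)] by simp
    have E1: "\<exists>al ga. al \<in> Mor G \<and> seg (F v) (sup v a) u v \<in> Mor G \<and> ga \<in> Mor G \<and>
                   src G al = rng G (seg (F v) (sup v a) u v) \<and> src G (seg (F v) (sup v a) u v) = rng G ga \<and>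
                   F v = cmp G (cmp G al (seg (F v) (sup v a) u v)) ga \<and>
                   deg G al = u \<and> deg G (seg (F v) (sup v a) u v) = v - u \<and> deg G ga = sup v a - v"
      by (rule seg_ex[OF conjunct1[OF Fp[OF lv]] h(1) dv]) (use Fp[OF lv] in simp)
    have E2: "\<exists>al ga. al \<in> Mor G \<and> seg (F w) (sup w a) v w \<in> Mor G \<and> ga \<in> Mor G \<and>
                   src G al = rng G (seg (F w) (sup w a) v w) \<and> src G (seg (F w) (sup w a) v w) = rng G ga \<and>
                   F w = cmp G (cmp G al (seg (F w) (sup w a) v w)) ga \<and>
                   deg G al = v \<and> deg G (seg (F w) (sup w a) v w) = w - v \<and> deg G ga = sup w a - w"
      by (rule seg_ex[OF conjunct1[OF Fp[OF h(3)]] h(2) dw]) (use Fp[OF h(3)] in simp)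
    obtain al1 ga1 where A: "al1 \<in> Mor G" "snd z u v \<in> Mor G" "ga1 \<in> Mor G"
      "src G al1 = rng G (snd z u v)" "src G (snd z u v) = rng G ga1"
      "F v = cmp G (cmp G al1 (snd z u v)) ga1" "deg G al1 = u" "deg G (snd z u v) = v - u"
      "deg G ga1 = sup v a - v"
      using E1 unfolding fz[symmetric] by blast
    obtain al2 ga2 where B: "al2 \<in> Mor G" "snd z v w \<in> Mor G" "ga2 \<in> Mor G"
      "src G al2 = rng G (snd z v w)" "src G (snd z v w) = rng G ga2"
      "F w = cmp G (cmp G al2 (snd z v w)) ga2" "deg G al2 = v" "deg G (snd z v w) = w - v"
      "deg G ga2 = sup w a - w"
      using E2 unfolding fz[symmetric] by blast
    define R where "R = snd y (sup v a - a + b) (sup w a - a + b)"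
    have R: "F w = cmp G (F v) R" "R \<in> Mor G" "src G (F v) = rng G R" using Fpre[OF h(3) h(2)] unfolding R_def by auto
    define Z1 where "Z1 = snd z u v"
    define Z2 where "Z2 = snd z v w"
    note A = A[folded Z1_def] and B = B[folded Z2_def]
    have c1: "cmp G al1 Z1 \<in> Mor G" "src G (cmp G al1 Z1) = src G Z1" "rng G (cmp G al1 Z1) = rng G al1"
      using cmpp[OF A(1) A(2) A(4)] by auto
    have sF: "src G (F v) = src G ga1" using cmpp[OF c1(1) A(3)] c1(2) A(5) A(6) by simp
    have sga1: "src G ga1 = rng G R" using sF R(3) by simp
    have c2: "cmp G ga1 R \<in> Mor G" using cmpp[OF A(3) R(2) sga1] by simp
    have c3: "cmp G Z2 ga2 \<in> Mor G" "rng G (cmp G Z2 ga2) = rng G Z2" using cmpp[OF B(2) B(3) B(5)] by auto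
    have s1: "src G (cmp G al1 Z1) = rng G ga1" using c1(2) A(5) by simp
    have e1: "F w = cmp G (cmp G al1 Z1) (cmp G ga1 R)"
      using R(1) A(6) assoc[OF c1(1) A(3) R(2) s1 sga1] by simp
    have e2: "F w = cmp G al2 (cmp G Z2 ga2)" using B(6) assoc[OF B(1) B(2) B(3) B(4) B(5)] by simp
    have d1: "deg G (cmp G al1 Z1) = v" using degc[OF A(1) A(2) A(4)] A(7,8) F5[OF h(1)] by simp
    have s3: "src G al2 = rng G (cmp G Z2 ga2)" using c3(2) B(4) by simp
    have d2: "deg G (cmp G ga1 R) = deg G (cmp G Z2 ga2)"
    proof -
      have "deg G (F w) = v + deg G (cmp G ga1 R)" using e1 degc[OF c1(1) c2] s1 cmpp[OF A(3) R(2) sga1] d1 by simp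
      moreover have "deg G (F w) = v + deg G (cmp G Z2 ga2)" using e2 degc[OF B(1) c3(1) s3] B(7) by simp
      ultimately show ?thesis by simp
    qed
    have s2: "src G (cmp G al1 Z1) = rng G (cmp G ga1 R)" using s1 cmpp[OF A(3) R(2) sga1] by simp
    have U: "cmp G al1 Z1 = al2" "cmp G ga1 R = cmp G Z2 ga2"
      using uniq2[OF c1(1) c2 B(1) c3(1) s2 s3] e1 e2 d1 d2 B(7) by auto
    have "src G Z1 = src G al2" using c1(2) U(1) by simp
    then have sZ: "src G Z1 = rng G Z2" using B(4) by simp
    have Z12: "cmp G Z1 Z2 \<in> Mor G" "src G (cmp G Z1 Z2) = src G Z2" "rng G (cmp G Z1 Z2) = rng G Z1"
      using cmpp[OF A(2) B(2) sZ] by auto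
    have "F w = cmp G (cmp G al1 (cmp G Z1 Z2)) ga2"
      using B(6) U(1) assoc[OF A(1) A(2) B(2) A(4) sZ] by simp
    moreover have "deg G (cmp G Z1 Z2) = w - u" using degc[OF A(2) B(2) sZ] A(8) B(8) F6[OF h(1,2)] by simp
    moreover have "src G al1 = rng G (cmp G Z1 Z2)" using A(4) Z12(3) by simp
    moreover have "src G (cmp G Z1 Z2) = rng G ga2" using Z12(2) B(5) by simp
    ultimately have "seg (F w) (sup w a) u w = cmp G Z1 Z2"
      using seg_char[OF A(1) Z12(1) B(3)] A(7) B(9) by blast
    then show ?thesis using sZ unfolding Z1_def Z2_def fz by simp
  qed
  have zi: "snd z u u = ident G (rng G (snd z u u))" if h: "le_ed u (fst z)" for u
  proof -
    have "u - u = (0::'k deg)" by (rule F7)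
    then have "deg G (snd z u u) = 0" "snd z u u \<in> Mor G" using zm[OF _ h] by auto
    then show ?thesis by (rule deg0[rotated])
  qed
  have gz: "graph_morphism G z" unfolding graph_morphism_def using zm zc zi by blast
  obtain ny where ny: "le_ed ny (fst y)" "\<forall>p i. ny \<le> p \<and> le_ed p (fst y) \<and> enat (p i) = fst y i \<longrightarrow>
           \<not> (\<exists>l\<in>Mor G. rng G l = vtx G y p \<and> deg G l = ebasis i)"
    using bpy unfolding boundary_path_def by blast
  define nz where "nz = a + (ny - b)"
  have nzD: "le_ed nz (fst z)" unfolding le_ed_def Dz nz_def
    using nz_sc ny(1) bDi unfolding le_ed_def by auto
  have "\<forall>u i. nz \<le> u \<and> le_ed u (fst z) \<and> enat (u i) = fst z i \<longrightarrow>
           \<not> (\<exists>l\<in>Mor G. rng G l = vtx G z u \<and> deg G l = ebasis i)"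
  proof (intro allI impI)
    fix u i assume h: "nz \<le> u \<and> le_ed u (fst z) \<and> enat (u i) = fst z i"
    have au: "a \<le> u" using h F8 unfolding nz_def by blast
    define u' where "u' = u - a + b"
    have su: "sup u a = u" using au by (simp add: sup_absorb1)
    have n1: "ny \<le> u'" using h F8 unfolding nz_def u'_def by blast
    have n2: "le_ed u' (fst y)" using rng[of u] h su unfolding u'_def by simp
    have n3: "enat (u' i) = fst y i"
    proof -
      have e: "u' i = u i - a i + b i" unfolding u'_def by simp
      have "enat (u i) = enat (a i) + (fst y i - enat (b i))" using h unfolding Dz by simp
      from bd_sc[OF this bDi[of i]] have "enat (u i - a i + b i) = fst y i" by blast
      then show ?thesis unfolding e .
    qed
    have bu: "b \<le> u'" unfolding u'_def by (rule F10)
    have Fu: "F u \<in> Mor G" "deg G (F u) = u" "src G (F u) = vtx G y u'"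
      using Fp[of u] h su gm_src[OF gy bu n2] unfolding u'_def by auto
    have ob: "src G (F u) \<in> Obj G" using obj Fu by blast
    have "seg (F u) (sup u a) u u = ident G (src G (F u))"
      apply (rule seg_char[OF Fu(1)])
      using idp[OF ob] idr[OF Fu(1)] Fu su degid[OF ob] by (auto simp: F7)
    then have "vtx G z u = vtx G y u'" unfolding vtx_def[of G z u] fz using idp[OF ob] Fu by simp
    then show "\<not> (\<exists>l\<in>Mor G. rng G l = vtx G z u \<and> deg G l = ebasis i)" using ny(2) n1 n2 n3 by auto
  qed
  then have bz: "boundary_path G z" unfolding boundary_path_def using gz nzD by blast
  have ci: "a i = the_enat (min (enat (n i)) (fst x i))" "b i = the_enat (min (enat (p i)) (fst y i))"
    "n i - a i = p i - b i" "m i \<le> n i" "p i \<le> q i" for i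
    using fun_cong[OF vab, of i] le_funD[OF mn, of i] le_funD[OF pq, of i] unfolding a_def b_def meet_ed_def by auto
  note co = coord[OF ci(1) ci(2) ci(3) ci(4) ci(5)]
  have mx: "meet_ed m (fst x) = meet_ed m (fst z)"
  proof (rule ext)
    fix i show "meet_ed m (fst x) i = meet_ed m (fst z) i"
      unfolding meet_ed_def Dz using co[of i] by blast
  qed
  have nx: "meet_ed n (fst x) = meet_ed n (fst z)"
  proof (rule ext)
    fix i show "meet_ed n (fst x) i = meet_ed n (fst z) i"
      unfolding meet_ed_def Dz using co[of i] by blast
  qed
  define mm where "mm = meet_ed m (fst x)"
  have mma: "mm \<le> a" unfolding mm_def a_def using meet_mono[OF mn] .
  have z1: "(0::'k deg) \<le> mm" by (rule F13)
  have Fa: "F a = cmp G lam (snd y b b)" unfolding F_def by (simp add: F11)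
  have X1: "snd x 0 mm \<in> Mor G" "snd x mm a \<in> Mor G" "deg G (snd x 0 mm) = mm" "deg G (snd x mm a) = a - mm"
    "src G (snd x 0 mm) = rng G (snd x mm a)" "cmp G (snd x 0 mm) (snd x mm a) = lam"
    "src G (snd x mm a) = vtx G x a"
    using gm_mor[OF gx z1 le_ed_mono[OF mma aD]] gm_mor[OF gx mma aD] gm_cmp[OF gx z1 mma aD]
      gm_src[OF gx mma aD] unfolding lam_def by auto
  have bb: "b \<le> b" by simp
  have Y1: "snd y b b \<in> Mor G" "deg G (snd y b b) = b - b" "rng G (snd y b b) = vtx G y b"
    using gm_mor[OF gy bb bD] gm_rng[OF gy bb bD] by auto
  have "seg (F a) (sup a a) mm a = snd x mm a"
    apply (rule seg_char[OF X1(1,2) Y1(1)]) using X1 Y1 Fa vxy by (auto simp: F7)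
  then have iii1: "snd x (meet_ed m (fst x)) (meet_ed n (fst x)) = snd z (meet_ed m (fst z)) (meet_ed n (fst z))"
    unfolding mx[symmetric] nx[symmetric] mm_def[symmetric] a_def[symmetric] fz by simp
  define qq where "qq = meet_ed q (fst y)"
  define c where "c = meet_ed (n + q - p) (fst z)"
  have cc: "c = a + (qq - b)"
  proof (rule ext)
    fix i
    have e1: "c i = the_enat (min (enat (n i + q i - p i)) (enat (a i) + (fst y i - enat (b i))))"
      unfolding c_def meet_ed_def Dz by simp
    have e2: "(a + (qq - b)) i = a i + (the_enat (min (enat (q i)) (fst y i)) - b i)"
      unfolding qq_def meet_ed_def by simp
    show "c i = (a + (qq - b)) i" unfolding e1 e2 using co[of i] by blast
  qed
  have bq: "b \<le> qq" unfolding b_def qq_def using meet_mono[OF pq] .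
  have qD: "le_ed qq (fst y)" unfolding qq_def by (rule meet_le)
  have qq: "qq \<le> qq" by simp
  have Fc: "F c = cmp G lam (snd y b qq)" unfolding F_def cc using F12[OF bq] by simp
  have Y2: "snd y b qq \<in> Mor G" "deg G (snd y b qq) = qq - b" "rng G (snd y b qq) = vtx G y b"
    "snd y qq qq \<in> Mor G" "deg G (snd y qq qq) = qq - qq"
    "src G (snd y b qq) = rng G (snd y qq qq)" "cmp G (snd y b qq) (snd y qq qq) = snd y b qq"
    using gm_mor[OF gy bq qD] gm_rng[OF gy bq qD] gm_mor[OF gy qq qD] gm_cmp[OF gy bq qq qD] by auto
  have "F c = cmp G (cmp G lam (snd y b qq)) (snd y qq qq)"
    using Fc assoc[OF lam(1) Y2(1) Y2(4)] Y2 slam by simp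
  then have "seg (F c) (sup c a) a c = snd y b qq"
    apply (intro seg_char[OF lam(1) Y2(1) Y2(4)]) using Y2 slam lam cc F12[OF bq] F7 by auto
  then have iii2: "snd y (meet_ed p (fst y)) (meet_ed q (fst y)) = snd z (meet_ed n (fst z)) (meet_ed (n + q - p) (fst z))"
    unfolding nx[symmetric] a_def[symmetric] b_def[symmetric] qq_def[symmetric] c_def[symmetric] fz by simp
  show ?thesis using bz mx nx iii1 iii2 by blast
qed

end
theorem proposition3p11:
  fixes G :: "('v, 'a, 'k::finite) kgraph"
    and x y :: "('k, 'a) gmor"
    and m n p q :: "'k deg"
  assumes "is_kgraph G"
    and "in_P G x m n" and "in_P G y p q"
    and "\<not> le_ed p (fst y)"
    and "approxV G x n y p"
  defines "z \<equiv> cat_path G (snd x 0 (meet_ed n (fst x))) (shift (meet_ed p (fst y)) y)"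
  shows "boundary_path G z \<and>
         (meet_ed m (fst x) = meet_ed m (fst z) \<and> meet_ed n (fst x) = meet_ed n (fst z)) \<and>
         (snd x (meet_ed m (fst x)) (meet_ed n (fst x)) = snd z (meet_ed m (fst z)) (meet_ed n (fst z)) \<and>
         snd y (meet_ed p (fst y)) (meet_ed q (fst y)) = snd z (meet_ed n (fst z)) (meet_ed (n + q - p) (fst z)))"
proof -
  interpret kg G using assms(1) by (rule kg.intro)
  show ?thesis by (rule main[OF assms(2) assms(3) assms(5) z_def[THEN meta_eq_to_obj_eq]])
qed

end
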